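(* Let $G$ be an ordered graph, and let $k,\ell \in \mathbb{N}$. If the irreducible block decomposition of $G$ contains at least $k$ blocks of order at least $\ell$, then $S_n(G) \geqslant F_{n,\ell}$ for each $n \leqslant k$.
   Context: Ordered graphs of order $n$ have vertex set $[n]$ with the natural order. A pair of vertices $u<v$ separates the edges of $G$ if every edge $ij$ ($i<j$) has $j\leqslant u$ or $v\leqslant i$; $G$ is irreducible if no pair separates its edges. For ordered graphs $G_1,\dots,G_m$, $G_1+\dots+G_m$ is the ordered graph obtained by placing copies of $G_1,\dots,G_m$ consecutively from left to right with no edges between copies. Every ordered graph $G$ can be written uniquely as $G=G_1+\dots+G_m$ with each $G_i$ irreducible; $(G_1,\dots,G_m)$ is its irreducible block decomposition and the $G_i$ are its irreducible blocks. $S_n(G)$ is the number of distinct (non-isomorphic as ordered graphs) induced ordered subgraphs of $G$ of order $n$. $F_{n,\ell}$: $F_{n,\ell}=0$ for $n<0$, $F_{0,\ell}=1$, $F_{n,\ell}=F_{n-1,\ell}+\dots+F_{n-\ell,\ell}$ for $n\geqslant1$. *)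

theory Defs
  imports Main
begin

text \<open>An ordered graph of order N is represented canonically as a pair (N, E) with vertex
  set {0..<N} (the natural order; this is [N] shifted by one) and edge set E of pairs (i,j)
  with i < j < N. Since the representation is canonical, two ordered graphs are isomorphic
  (as ordered graphs) iff they are equal.\<close>

type_synonym ograph = "nat \<times> (nat \<times> nat) set"

definition ordered_graph :: "ograph \<Rightarrow> bool" where
  "ordered_graph G \<longleftrightarrow> snd G \<subseteq> {(i, j). i < j \<and> j < fst G}"

definition separates :: "ograph \<Rightarrow> nat \<Rightarrow> nat \<Rightarrow> bool" where
  "separates G u v \<longleftrightarrow> u < v \<and> v < fst G \<and> (\<forall>(i, j)\<in>snd G. j \<le> u \<or> v \<le> i)"

definition irreducible_og :: "ograph \<Rightarrow> bool" where
  "irreducible_og G \<longleftrightarrow> \<not> (\<exists>u v. separates G u v)"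

definition og_plus :: "ograph \<Rightarrow> ograph \<Rightarrow> ograph" where
  "og_plus G H = (fst G + fst H, snd G \<union> {(i + fst G, j + fst G) | i j. (i, j) \<in> snd H})"

definition og_sum :: "ograph list \<Rightarrow> ograph" where
  "og_sum Gs = foldr og_plus Gs (0, {})"

definition block_decomposition :: "ograph \<Rightarrow> ograph list \<Rightarrow> bool" where
  "block_decomposition G Gs \<longleftrightarrow>
     (\<forall>H\<in>set Gs. ordered_graph H \<and> fst H > 0 \<and> irreducible_og H) \<and> og_sum Gs = G"

definition og_induced :: "ograph \<Rightarrow> nat set \<Rightarrow> ograph" where
  "og_induced G A =
     (card A, {(card {a\<in>A. a < i}, card {a\<in>A. a < j}) | i j. (i, j) \<in> snd G \<and> i \<in> A \<and> j \<in> A})"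

definition S :: "nat \<Rightarrow> ograph \<Rightarrow> nat" where
  "S n G = card {og_induced G A | A. A \<subseteq> {0..<fst G} \<and> card A = n}"

fun F :: "nat \<Rightarrow> nat \<Rightarrow> nat" where
  "F 0 l = 1"
| "F (Suc n) l = (\<Sum>i<min l (Suc n). F (n - i) l)"

end

theory Submission
  imports Defs
begin

lemma og_plus_fst[simp]: "fst (og_plus G H) = fst G + fst H"
  by (simp add: og_plus_def)
lemma og_plus_snd: "snd (og_plus G H) = snd G \<union> {(i + fst G, j + fst G) | i j. (i, j) \<in> snd H}"
  by (simp add: og_plus_def)
lemma og_sum_Nil[simp]: "og_sum [] = (0, {})" by (simp add: og_sum_def)
lemma og_sum_Cons[simp]: "og_sum (H # Hs) = og_plus H (og_sum Hs)" by (simp add: og_sum_def)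

lemma ordered_og_plus: "ordered_graph X \<Longrightarrow> ordered_graph Y \<Longrightarrow> ordered_graph (og_plus X Y)"
  unfolding ordered_graph_def og_plus_def by auto

lemma ordered_og_sum: "\<forall>H\<in>set Hs. ordered_graph H \<Longrightarrow> ordered_graph (og_sum Hs)"
proof (induction Hs)
  case Nil show ?case by (simp add: ordered_graph_def)
next
  case (Cons a Hs) thus ?case by (simp add: ordered_og_plus)
qed

lemma og_plus_empty: "og_plus (0, {}) Y = Y"
  unfolding og_plus_def by auto

lemma og_induced_empty: "og_induced G {} = (0, {})"
  by (simp add: og_induced_def)

lemma rank_lt_card: "finite A \<Longrightarrow> (j::nat) \<in> A \<Longrightarrow> card {a\<in>A. a < j} < card A"
proof -
  assume A: "finite A" and j: "j \<in> A"
  have "{a\<in>A. a < j} \<subseteq> A - {j}" by blast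
  then have "card {a\<in>A. a < j} \<le> card (A - {j})" using A by (simp add: card_mono)
  also have "\<dots> < card A" using A j by (rule card_Diff1_less)
  finally show ?thesis .
qed

lemma rank_mono: "finite A \<Longrightarrow> i \<le> j \<Longrightarrow> card {a\<in>A. a < (i::nat)} \<le> card {a\<in>A. a < j}"
proof -
  assume A: "finite A" and ij: "i \<le> j"
  have "{a\<in>A. a < i} \<subseteq> {a\<in>A. a < j}" using ij by auto
  then show ?thesis using A by (simp add: card_mono)
qed

lemma rank_strict: "finite A \<Longrightarrow> i \<in> A \<Longrightarrow> (i::nat) < j \<Longrightarrow> card {a\<in>A. a < i} < card {a\<in>A. a < j}"
proof -
  assume A: "finite A" and i: "i \<in> A" and ij: "i < j"
  have "{a\<in>A. a < i} \<subseteq> {a\<in>A. a < j} - {i}" using ij by auto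
  then have "card {a\<in>A. a < i} \<le> card ({a\<in>A. a < j} - {i})" using A by (simp add: card_mono)
  also have "\<dots> < card {a\<in>A. a < j}" using A i ij by (intro card_Diff1_less) auto
  finally show ?thesis .
qed

lemma fst_induced[simp]: "fst (og_induced G A) = card A" by (simp add: og_induced_def)
lemma snd_induced: "snd (og_induced G A) =
  {(card {a\<in>A. a < i}, card {a\<in>A. a < j}) | i j. (i, j) \<in> snd G \<and> i \<in> A \<and> j \<in> A}"
  by (simp add: og_induced_def)

lemma ordered_induced: "ordered_graph G \<Longrightarrow> finite A \<Longrightarrow> ordered_graph (og_induced G A)"
proof -
  assume G: "ordered_graph G" and A: "finite A"
  show ?thesis unfolding ordered_graph_def
  proof
    fix e assume "e \<in> snd (og_induced G A)"
    then obtain i j where ij: "e = (card {c\<in>A. c<i}, card {c\<in>A. c<j})" "(i,j) \<in> snd G" "i \<in> A" "j \<in> A"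
      by (auto simp: snd_induced)
    have "i < j" using ij(2) G unfolding ordered_graph_def by auto
    then show "e \<in> {(i, j). i < j \<and> j < fst (og_induced G A)}"
      using rank_strict[OF A ij(3)] rank_lt_card[OF A ij(4)] ij(1) by simp
  qed
qed

lemma plus_inj:
  assumes "ordered_graph T" "og_plus T R = og_plus T R'"
  shows "R = R'"
proof -
  have f: "fst R = fst R'" using assms(2) by (metis og_plus_fst add_left_cancel)
  have s: "snd T \<union> {(i + fst T, j + fst T) | i j. (i, j) \<in> snd R} = snd T \<union> {(i + fst T, j + fst T) | i j. (i, j) \<in> snd R'}"
    using assms(2) by (metis og_plus_snd)
  have T: "\<And>i j. (i,j) \<in> snd T \<Longrightarrow> i < fst T" using assms(1) unfolding ordered_graph_def by auto
  have "snd R \<subseteq> snd R'"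
  proof
    fix p assume "p \<in> snd R"
    then obtain i j where p: "p = (i,j)" "(i,j) \<in> snd R" by (cases p) auto
    then have "(i + fst T, j + fst T) \<in> snd T \<union> {(i + fst T, j + fst T) | i j. (i, j) \<in> snd R'}"
      using s by blast
    then have "(i + fst T, j + fst T) \<in> {(i + fst T, j + fst T) | i j. (i, j) \<in> snd R'}"
      using T by fastforce
    then show "p \<in> snd R'" using p by auto
  qed
  moreover have "snd R' \<subseteq> snd R"
  proof
    fix p assume "p \<in> snd R'"
    then obtain i j where p: "p = (i,j)" "(i,j) \<in> snd R'" by (cases p) auto
    then have "(i + fst T, j + fst T) \<in> snd T \<union> {(i + fst T, j + fst T) | i j. (i, j) \<in> snd R}"
      using s by blast
    then have "(i + fst T, j + fst T) \<in> {(i + fst T, j + fst T) | i j. (i, j) \<in> snd R}"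
      using T by fastforce
    then show "p \<in> snd R" using p by auto
  qed
  ultimately show ?thesis using f by (simp add: prod_eq_iff)
qed

lemma plus_unique_aux:
  assumes "irreducible_og T'" "ordered_graph T" "0 < fst T" "fst T < fst T'"
    "og_plus T R = og_plus T' R'"
  shows False
proof -
  define p where "p = fst T - 1"
  have "\<not> separates T' p (p+1)" using assms(1) unfolding irreducible_og_def by blast
  moreover have "p < p + 1" "p + 1 < fst T'" using assms(3,4) p_def by auto
  ultimately obtain i j where ij: "(i,j) \<in> snd T'" "\<not> (j \<le> p \<or> p + 1 \<le> i)"
    unfolding separates_def by auto
  then have "(i,j) \<in> snd (og_plus T' R')" by (simp add: og_plus_snd)
  then have "(i,j) \<in> snd (og_plus T R)" using assms(5) by simp
  then have "(i,j) \<in> snd T \<or> (\<exists>a b. (i,j) = (a + fst T, b + fst T))"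
    by (auto simp: og_plus_snd)
  then show False
  proof
    assume "(i,j) \<in> snd T"
    then have "j < fst T" using assms(2) unfolding ordered_graph_def by auto
    then show False using ij(2) p_def by linarith
  next
    assume "\<exists>a b. (i,j) = (a + fst T, b + fst T)"
    then have "i \<ge> fst T" by auto
    then show False using ij(2) p_def assms(3) by linarith
  qed
qed

lemma plus_unique:
  assumes "irreducible_og T" "irreducible_og T'" "ordered_graph T" "ordered_graph T'"
    "0 < fst T" "0 < fst T'" "og_plus T R = og_plus T' R'"
  shows "fst T = fst T'"
proof (rule ccontr)
  assume "fst T \<noteq> fst T'"
  then consider "fst T < fst T'" | "fst T' < fst T" by linarith
  then show False
  proof cases
    case 1 show False by (rule plus_unique_aux[OF assms(2,3,5) 1 assms(7)])
  next
    case 2 show False by (rule plus_unique_aux[OF assms(1,4,6) 2 assms(7)[symmetric]])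
  qed
qed


lemma induced_plus:
  assumes X: "ordered_graph X" and A: "A \<subseteq> {0..<fst X}" and B: "finite B"
  shows "og_induced (og_plus X Y) (A \<union> (\<lambda>x. x + fst X) ` B) = og_plus (og_induced X A) (og_induced Y B)"
proof -
  define a where "a = fst X"
  define C where "C = A \<union> (\<lambda>x. x + a) ` B"
  have fA: "finite A" using A finite_subset by blast
  have inj: "\<And>D. inj_on (\<lambda>x. x + a) D" by (simp add: inj_on_def)
  have cardU: "\<And>D. D \<subseteq> B \<Longrightarrow> card (A \<union> (\<lambda>x. x + a) ` D) = card A + card D"
  proof -
    fix D assume D: "D \<subseteq> B"
    have "finite D" using D B finite_subset by blast
    moreover have "A \<inter> (\<lambda>x. x + a) ` D = {}" using A a_def by auto
    ultimately show "card (A \<union> (\<lambda>x. x + a) ` D) = card A + card D"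
      using card_Un_disjoint[OF fA] card_image[OF inj] by auto
  qed
  have cardC: "card C = card A + card B" using cardU[of B] C_def by simp
  have r1: "\<And>x. x < a \<Longrightarrow> {c\<in>C. c < x} = {c\<in>A. c < x}" using C_def by auto
  have r2: "\<And>y. {c\<in>C. c < y + a} = A \<union> (\<lambda>x. x + a) ` {b\<in>B. b < y}"
    using A a_def C_def by auto
  have r2c: "\<And>y. card {c\<in>C. c < y + a} = card A + card {b\<in>B. b < y}"
    using r2 cardU by (metis (no_types, lifting) mem_Collect_eq subsetI)
  have memA: "\<And>x. x < a \<Longrightarrow> x \<in> C \<longleftrightarrow> x \<in> A" using C_def by auto
  have memB: "\<And>y. y + a \<in> C \<longleftrightarrow> y \<in> B" using A a_def C_def by auto
  have Xe: "\<And>i j. (i,j) \<in> snd X \<Longrightarrow> i < a \<and> j < a" using X a_def unfolding ordered_graph_def by auto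
  have "snd (og_induced (og_plus X Y) C) = snd (og_plus (og_induced X A) (og_induced Y B))"
  proof (rule set_eqI, rule iffI)
    fix e assume "e \<in> snd (og_induced (og_plus X Y) C)"
    then obtain i j where e: "e = (card {c\<in>C. c<i}, card {c\<in>C. c<j})" "(i,j) \<in> snd (og_plus X Y)" "i \<in> C" "j \<in> C"
      by (auto simp: snd_induced)
    from e(2) consider "(i,j) \<in> snd X" | i0 j0 where "(i0,j0) \<in> snd Y" "i = i0 + a" "j = j0 + a"
      by (auto simp: og_plus_snd a_def)
    then show "e \<in> snd (og_plus (og_induced X A) (og_induced Y B))"
    proof cases
      case 1
      then have ij: "i < a" "j < a" using Xe by auto
      have "e \<in> snd (og_induced X A)" unfolding snd_induced
        using e ij memA r1 1 by auto
      then show ?thesis by (simp add: og_plus_snd)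
    next
      case 2
      have "(card {b\<in>B. b<i0}, card {b\<in>B. b<j0}) \<in> snd (og_induced Y B)"
        unfolding snd_induced using 2 e memB by auto
      moreover have "e = (card {b\<in>B. b<i0} + card A, card {b\<in>B. b<j0} + card A)"
        using e(1) 2 r2c by simp
      ultimately show ?thesis by (auto simp: og_plus_snd)
    qed
  next
    fix e assume "e \<in> snd (og_plus (og_induced X A) (og_induced Y B))"
    then consider "e \<in> snd (og_induced X A)"
      | p q where "(p, q) \<in> snd (og_induced Y B)" "e = (p + card A, q + card A)"
      by (auto simp: og_plus_snd)
    then show "e \<in> snd (og_induced (og_plus X Y) C)"
    proof cases
      case 1
      then obtain i j where ij: "e = (card {c\<in>A. c<i}, card {c\<in>A. c<j})" "(i,j) \<in> snd X" "i \<in> A" "j \<in> A"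
        by (auto simp: snd_induced)
      then have "i < a" "j < a" using Xe by auto
      then have "e = (card {c\<in>C. c<i}, card {c\<in>C. c<j})" "i \<in> C" "j \<in> C"
        using ij r1 memA by auto
      moreover have "(i,j) \<in> snd (og_plus X Y)" using ij by (simp add: og_plus_snd)
      ultimately show ?thesis unfolding snd_induced by blast
    next
      case 2
      then obtain i j where ij: "p = card {c\<in>B. c<i}" "q = card {c\<in>B. c<j}" "(i,j) \<in> snd Y" "i \<in> B" "j \<in> B"
        by (auto simp: snd_induced)
      then have "e = (card {c\<in>C. c<i + a}, card {c\<in>C. c<j + a})" "i + a \<in> C" "j + a \<in> C"
        using 2 r2c memB by auto
      moreover have "(i + a, j + a) \<in> snd (og_plus X Y)" using ij by (auto simp: og_plus_snd a_def)
      ultimately show ?thesis unfolding snd_induced by blast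
    qed
  qed
  then show ?thesis using cardC C_def a_def by (simp add: prod_eq_iff)
qed

definition good :: "(nat \<times> nat) set \<Rightarrow> nat set \<Rightarrow> bool" where
  "good E A \<longleftrightarrow> (\<forall>a\<in>A. (\<exists>b\<in>A. a < b) \<longrightarrow> (\<exists>i j. (i,j) \<in> E \<and> i \<in> A \<and> j \<in> A \<and> i \<le> a \<and> a < j))"

lemma good_irreducible:
  assumes A: "finite A" and g: "good (snd G) A"
  shows "irreducible_og (og_induced G A)"
  unfolding irreducible_og_def
proof
  assume "\<exists>u v. separates (og_induced G A) u v"
  then obtain u v where uv: "u < v" "v < card A"
    and sep: "\<And>x y. (x,y) \<in> snd (og_induced G A) \<Longrightarrow> y \<le> u \<or> v \<le> x"
    unfolding separates_def by fastforce
  have Ane: "A \<noteq> {}" using uv by auto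
  define R where "R = {x\<in>A. card {y\<in>A. y < x} \<le> u}"
  have e: "{y\<in>A. y < Min A} = {}" using A Ane by auto
  have "Min A \<in> A" using A Ane by simp
  moreover have "card {y\<in>A. y < Min A} = 0" by (simp only: e card.empty)
  ultimately have "Min A \<in> A \<and> card {y\<in>A. y < Min A} \<le> u" by (metis le0)
  then have "Min A \<in> R" unfolding R_def by (simp only: mem_Collect_eq)
  then have Rne: "R \<noteq> {}" by auto
  have fR: "finite R" using A R_def by auto
  define a where "a = Max R"
  have aR: "a \<in> R" using fR Rne a_def by simp
  then have aA: "a \<in> A" and ra: "card {y\<in>A. y < a} \<le> u" using R_def by auto
  define m where "m = Max A"
  have mA: "m \<in> A" using A Ane m_def by simp
  have "{y\<in>A. y < m} = A - {m}" using A Ane m_def by (auto simp: order.not_eq_order_implies_strict)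
  then have "card {y\<in>A. y < m} = card A - 1" using A mA by simp
  then have "m \<notin> R" using R_def uv by auto
  moreover have "a \<le> m" using aA A m_def by simp
  ultimately have am: "a < m" using aR le_neq_implies_less by blast
  obtain i j where ij: "(i,j) \<in> snd G" "i \<in> A" "j \<in> A" "i \<le> a" "a < j"
    using g aA am mA unfolding good_def by blast
  have "card {y\<in>A. y < i} \<le> card {y\<in>A. y < a}" using rank_mono[OF A ij(4)] .
  then have ri: "card {y\<in>A. y < i} \<le> u" using ra by simp
  have "j \<notin> R"
  proof
    assume "j \<in> R" then have "j \<le> a" using fR a_def by simp
    then show False using ij(5) by simp
  qed
  then have rj: "\<not> card {y\<in>A. y < j} \<le> u" using R_def ij(3) by auto
  have "(card {y\<in>A. y < i}, card {y\<in>A. y < j}) \<in> snd (og_induced G A)"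
    unfolding snd_induced using ij by blast
  then have "card {y\<in>A. y < j} \<le> u \<or> v \<le> card {y\<in>A. y < i}" by (rule sep)
  then show False using ri rj uv by linarith
qed

lemma good_step:
  assumes H: "ordered_graph H" "irreducible_og H"
  shows "d + 2 \<le> fst H \<Longrightarrow> \<exists>x. d + 1 \<le> x \<and> x < fst H \<and> good (snd H) ({0..<d+1} \<union> {x})"
proof (induction d)
  case 0
  have "\<not> separates H 0 1" using H(2) unfolding irreducible_og_def by blast
  moreover have "(0::nat) < 1" "1 < fst H" using 0 by auto
  ultimately have "\<not> (\<forall>(i, j)\<in>snd H. j \<le> 0 \<or> 1 \<le> i)" unfolding separates_def by blast
  then obtain i j where ij: "(i,j) \<in> snd H" "\<not> (j \<le> 0 \<or> 1 \<le> i)" by blast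
  then have i0: "i = 0" and j1: "1 \<le> j" by auto
  have jN: "j < fst H" using ij(1) H(1) unfolding ordered_graph_def by auto
  have "good (snd H) ({0..<0+1} \<union> {j})"
    unfolding good_def using ij i0 j1 by auto
  then show ?case using j1 jN by auto
next
  case (Suc d)
  then obtain x where x: "d + 1 \<le> x" "x < fst H" and g: "good (snd H) ({0..<d+1} \<union> {x})" by auto
  show ?case
  proof (cases "x = d + 1")
    case False
    then have xd: "d + 2 \<le> x" using x by simp
    have "good (snd H) ({0..<Suc d+1} \<union> {x})"
      unfolding good_def
    proof (intro ballI impI)
      fix a assume a: "a \<in> {0..<Suc d+1} \<union> {x}" and "\<exists>b\<in>{0..<Suc d+1} \<union> {x}. a < b"
      then have ax: "a < x" using xd by auto
      show "\<exists>i j. (i,j) \<in> snd H \<and> i \<in> {0..<Suc d+1} \<union> {x} \<and> j \<in> {0..<Suc d+1} \<union> {x} \<and> i \<le> a \<and> a < j"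
      proof (cases "a = d + 1")
        case True
        have "d \<in> {0..<d+1} \<union> {x}" "x \<in> {0..<d+1} \<union> {x}" "d < x" using xd by auto
        then obtain i j where ij: "(i,j) \<in> snd H" "i \<in> {0..<d+1} \<union> {x}" "j \<in> {0..<d+1} \<union> {x}" "i \<le> d" "d < j"
          using g unfolding good_def by blast
        then have "j = x" by auto
        then show ?thesis using ij True xd by (intro exI[of _ i] exI[of _ x]) auto
      next
        case False
        then have "a \<in> {0..<d+1} \<union> {x}" "x \<in> {0..<d+1} \<union> {x}" using a ax by auto
        then obtain i j where ij: "(i,j) \<in> snd H" "i \<in> {0..<d+1} \<union> {x}" "j \<in> {0..<d+1} \<union> {x}" "i \<le> a" "a < j"
          using g ax unfolding good_def by blast
        then show ?thesis by (intro exI[of _ i] exI[of _ j]) auto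
      qed
    qed
    then show ?thesis using xd x by auto
  next
    case True
    have "\<not> separates H (d+1) (d+2)" using H(2) unfolding irreducible_og_def by blast
    moreover have "d+1 < d+2" "d+2 < fst H" using Suc.prems by auto
    ultimately have "\<not> (\<forall>(i, j)\<in>snd H. j \<le> d+1 \<or> d+2 \<le> i)" unfolding separates_def by blast
    then obtain i j where ij: "(i,j) \<in> snd H" "\<not> (j \<le> d+1 \<or> d+2 \<le> i)" by blast
    have jN: "j < fst H" using ij(1) H(1) unfolding ordered_graph_def by auto
    have "good (snd H) ({0..<Suc d+1} \<union> {j})"
      unfolding good_def
    proof (intro ballI impI)
      fix a assume a: "a \<in> {0..<Suc d+1} \<union> {j}" and "\<exists>b\<in>{0..<Suc d+1} \<union> {j}. a < b"
      then have ax: "a < j" using ij(2) by auto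
      show "\<exists>i' j'. (i',j') \<in> snd H \<and> i' \<in> {0..<Suc d+1} \<union> {j} \<and> j' \<in> {0..<Suc d+1} \<union> {j} \<and> i' \<le> a \<and> a < j'"
      proof (cases "a = d + 1")
        case True
        then show ?thesis using ij by (intro exI[of _ i] exI[of _ j]) auto
      next
        case False
        then have "a \<in> {0..<d+1} \<union> {x}" "x \<in> {0..<d+1} \<union> {x}" "a < x" using a ax True by auto
        then obtain i' j' where ij': "(i',j') \<in> snd H" "i' \<in> {0..<d+1} \<union> {x}" "j' \<in> {0..<d+1} \<union> {x}" "i' \<le> a" "a < j'"
          using g unfolding good_def by blast
        then show ?thesis using True by (intro exI[of _ i'] exI[of _ j']) auto
      qed
    qed
    moreover have "Suc d + 1 \<le> j" using ij(2) by simp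
    ultimately show ?thesis using jN by blast
  qed
qed

lemma good_exists:
  assumes H: "ordered_graph H" "irreducible_og H" and c: "1 \<le> c" "c \<le> fst H"
  shows "\<exists>A. A \<subseteq> {0..<fst H} \<and> card A = c \<and> good (snd H) A"
proof (cases "c = 1")
  case True
  have "good (snd H) {0}" unfolding good_def by auto
  then show ?thesis using True c by (intro exI[of _ "{0}"]) auto
next
  case False
  then obtain d where d: "c = d + 2" using c by (metis add_2_eq_Suc' le_Suc_ex le_antisym not_less_eq_eq one_add_one plus_1_eq_Suc)
  then obtain x where x: "d + 1 \<le> x" "x < fst H" "good (snd H) ({0..<d+1} \<union> {x})"
    using good_step[OF H, of d] c by auto
  have "card ({0..<d+1} \<union> {x}) = c" using x(1) d by simp
  moreover have "{0..<d+1} \<union> {x} \<subseteq> {0..<fst H}" using x c d by auto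
  ultimately show ?thesis using x(3) by blast
qed

definition Ind :: "nat \<Rightarrow> ograph \<Rightarrow> ograph set" where
  "Ind n G = {og_induced G A | A. A \<subseteq> {0..<fst G} \<and> card A = n}"

lemma S_Ind: "S n G = card (Ind n G)" by (simp add: S_def Ind_def)

lemma finite_Ind: "finite (Ind n G)"
proof -
  have "Ind n G \<subseteq> og_induced G ` Pow {0..<fst G}" unfolding Ind_def by auto
  then show ?thesis by (rule finite_subset) simp
qed

lemma Ind_zero: "Ind 0 G = {og_induced G {}}"
proof -
  have "\<And>A. A \<subseteq> {0..<fst G} \<Longrightarrow> card A = 0 \<Longrightarrow> A = {}"
    using finite_subset by (metis card_0_eq finite_atLeastLessThan)
  then show ?thesis unfolding Ind_def by auto
qed

lemma S_zero: "S 0 G = 1" by (simp add: S_Ind Ind_zero)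

lemma Ind_plus:
  assumes X: "ordered_graph X" and T: "T \<in> Ind c X" and R: "R \<in> Ind d Y"
  shows "og_plus T R \<in> Ind (c + d) (og_plus X Y)"
proof -
  obtain A where A: "T = og_induced X A" "A \<subseteq> {0..<fst X}" "card A = c" using T unfolding Ind_def by auto
  obtain B where B: "R = og_induced Y B" "B \<subseteq> {0..<fst Y}" "card B = d" using R unfolding Ind_def by auto
  have fB: "finite B" using B(2) finite_subset by blast
  have fA: "finite A" using A(2) finite_subset by blast
  have eq: "og_plus T R = og_induced (og_plus X Y) (A \<union> (\<lambda>x. x + fst X) ` B)"
    using induced_plus[OF X A(2) fB] A B by simp
  have sub: "A \<union> (\<lambda>x. x + fst X) ` B \<subseteq> {0..<fst (og_plus X Y)}" using A(2) B(2) by auto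
  have disj: "A \<inter> (\<lambda>x. x + fst X) ` B = {}" using A(2) by auto
  have inj: "inj_on (\<lambda>x. x + fst X) B" by (simp add: inj_on_def)
  have "card (A \<union> (\<lambda>x. x + fst X) ` B) = c + d"
    using card_Un_disjoint[OF fA _ disj] fB card_image[OF inj] A(3) B(3) by simp
  then show ?thesis using eq sub unfolding Ind_def by blast
qed

lemma fst_Ind: "T \<in> Ind c X \<Longrightarrow> fst T = c" unfolding Ind_def by auto

lemma good_Ind:
  assumes H: "ordered_graph H" "irreducible_og H" and c: "1 \<le> c" "c \<le> fst H"
  shows "\<exists>T. T \<in> Ind c H \<and> irreducible_og T \<and> ordered_graph T"
proof -
  obtain A where A: "A \<subseteq> {0..<fst H}" "card A = c" "good (snd H) A"
    using good_exists[OF H c] by blast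
  have fA: "finite A" using A(1) finite_subset by blast
  have "og_induced H A \<in> Ind c H" using A unfolding Ind_def by blast
  moreover have "irreducible_og (og_induced H A)" by (rule good_irreducible[OF fA A(3)])
  moreover have "ordered_graph (og_induced H A)" by (rule ordered_induced[OF H(1) fA])
  ultimately show ?thesis by blast
qed

lemma main:
  "(\<forall>H\<in>set Gs. ordered_graph H \<and> irreducible_og H) \<Longrightarrow> n \<le> length (filter (\<lambda>H. l \<le> fst H) Gs)
   \<Longrightarrow> F n l \<le> S n (og_sum Gs)"
proof (induction Gs arbitrary: n)
  case Nil
  then show ?case by (simp add: S_zero)
next
  case (Cons H Hs)
  define R where "R = og_sum Hs"
  have Hh: "ordered_graph H" "irreducible_og H" using Cons.prems(1) by auto
  have Hs: "\<forall>H\<in>set Hs. ordered_graph H \<and> irreducible_og H" using Cons.prems(1) by auto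
  show ?case
  proof (cases n)
    case 0
    then show ?thesis by (simp add: S_zero)
  next
    case (Suc m)
    show ?thesis
    proof (cases "l \<le> fst H")
      case big: True
      have mc: "m \<le> length (filter (\<lambda>H. l \<le> fst H) Hs)" using Cons.prems(2) Suc big by simp
      define M where "M = min l (Suc m)"
      have "\<forall>i. \<exists>T. i < M \<longrightarrow> (T \<in> Ind (Suc i) H \<and> irreducible_og T \<and> ordered_graph T)"
      proof
        fix i
        show "\<exists>T. i < M \<longrightarrow> (T \<in> Ind (Suc i) H \<and> irreducible_og T \<and> ordered_graph T)"
        proof (cases "i < M")
          case True
          then have "1 \<le> Suc i" "Suc i \<le> fst H" using big M_def by auto
          then show ?thesis using good_Ind[OF Hh] by blast
        qed simp
      qed
      then obtain T where T: "\<And>i. i < M \<Longrightarrow> T i \<in> Ind (Suc i) H \<and> irreducible_og (T i) \<and> ordered_graph (T i)"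
        using choice by metis
      define U where "U = (\<Union>i\<in>{..<M}. og_plus (T i) ` Ind (m - i) R)"
      have sub: "U \<subseteq> Ind (Suc m) (og_plus H R)"
      proof
        fix x assume "x \<in> U"
        then obtain i Y where iY: "i < M" "Y \<in> Ind (m - i) R" "x = og_plus (T i) Y" unfolding U_def by blast
        have "x \<in> Ind (Suc i + (m - i)) (og_plus H R)"
          using Ind_plus[OF Hh(1) _ iY(2)] T[OF iY(1)] iY(3) by blast
        moreover have "Suc i + (m - i) = Suc m" using iY(1) M_def by simp
        ultimately show "x \<in> Ind (Suc m) (og_plus H R)" by simp
      qed
      have cardU: "card U = (\<Sum>i<M. card (og_plus (T i) ` Ind (m - i) R))"
        unfolding U_def
      proof (rule card_UN_disjoint)
        show "finite {..<M}" by simp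
        show "\<forall>i\<in>{..<M}. finite (og_plus (T i) ` Ind (m - i) R)" using finite_Ind by simp
        show "\<forall>i\<in>{..<M}. \<forall>j\<in>{..<M}. i \<noteq> j \<longrightarrow> og_plus (T i) ` Ind (m - i) R \<inter> og_plus (T j) ` Ind (m - j) R = {}"
        proof (intro ballI impI)
          fix i j assume i: "i \<in> {..<M}" and j: "j \<in> {..<M}" and ij: "i \<noteq> j"
          show "og_plus (T i) ` Ind (m - i) R \<inter> og_plus (T j) ` Ind (m - j) R = {}"
          proof (rule ccontr)
            assume "og_plus (T i) ` Ind (m - i) R \<inter> og_plus (T j) ` Ind (m - j) R \<noteq> {}"
            then obtain Y1 Y2 where e: "og_plus (T i) Y1 = og_plus (T j) Y2" by blast
            have Ti: "T i \<in> Ind (Suc i) H" "irreducible_og (T i)" "ordered_graph (T i)" using T i by auto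
            have Tj: "T j \<in> Ind (Suc j) H" "irreducible_og (T j)" "ordered_graph (T j)" using T j by auto
            have fi: "fst (T i) = Suc i" using fst_Ind Ti(1) .
            have fj: "fst (T j) = Suc j" using fst_Ind Tj(1) .
            have "fst (T i) = fst (T j)"
              using plus_unique[OF Ti(2) Tj(2) Ti(3) Tj(3) _ _ e] fi fj by simp
            then show False using fi fj ij by simp
          qed
        qed
      qed
      have "F n l = (\<Sum>i<M. F (m - i) l)" using Suc M_def by simp
      also have "\<dots> \<le> (\<Sum>i<M. card (og_plus (T i) ` Ind (m - i) R))"
      proof (rule sum_mono)
        fix i assume i: "i \<in> {..<M}"
        have "inj_on (og_plus (T i)) (Ind (m - i) R)"
          using plus_inj T i by (meson inj_onI lessThan_iff)
        then have "card (og_plus (T i) ` Ind (m - i) R) = card (Ind (m - i) R)" by (rule card_image)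
        moreover have "F (m - i) l \<le> S (m - i) R"
          unfolding R_def using Cons.IH[OF Hs] mc by simp
        ultimately show "F (m - i) l \<le> card (og_plus (T i) ` Ind (m - i) R)" by (simp add: S_Ind)
      qed
      also have "\<dots> = card U" using cardU by simp
      also have "\<dots> \<le> card (Ind (Suc m) (og_plus H R))" using sub finite_Ind by (rule card_mono[rotated])
      finally show ?thesis using Suc R_def by (simp add: S_Ind)
    next
      case False
      have nc: "n \<le> length (filter (\<lambda>H. l \<le> fst H) Hs)" using Cons.prems(2) False by simp
      have "Ind n R \<subseteq> Ind n (og_plus H R)"
      proof
        fix Y assume Y: "Y \<in> Ind n R"
        have "og_induced H {} \<in> Ind 0 H" by (simp add: Ind_zero)
        from Ind_plus[OF Hh(1) this Y] show "Y \<in> Ind n (og_plus H R)"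
          by (simp add: og_induced_empty og_plus_empty)
      qed
      then have "card (Ind n R) \<le> card (Ind n (og_plus H R))" using finite_Ind by (rule card_mono[rotated])
      moreover have "F n l \<le> S n R" unfolding R_def using Cons.IH[OF Hs nc] .
      ultimately show ?thesis using R_def by (simp add: S_Ind)
    qed
  qed
qed

theorem lemma15:
  fixes G :: ograph and Gs :: "ograph list" and k l n :: nat
  assumes "ordered_graph G"
    and "block_decomposition G Gs"
    and "k \<le> length (filter (\<lambda>H. fst H \<ge> l) Gs)"
    and "n \<le> k"
  shows "S n G \<ge> F n l"
proof -
  have "\<forall>H\<in>set Gs. ordered_graph H \<and> irreducible_og H" and G: "og_sum Gs = G"
    using assms(2) unfolding block_decomposition_def by auto
  moreover have "n \<le> length (filter (\<lambda>H. l \<le> fst H) Gs)" using assms(3,4) by simp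
  ultimately show ?thesis using main by metis
qed

end
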